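(* Let $c$ be a non-constant clause on the variables $x_1,\dots,x_n$, and let $a\in[-1,1]^n$. If $\mathrm{FE}_c(a)=-1$, then $a$ is a feasible solution of $\mathrm{FE}_c$.
   Context: Boolean values are encoded as $\pm1$, with $-1$ standing for True. A clause is a CNF, cardinality, XOR or NAE constraint, regarded as a function $\{\pm1\}^n\to\{\pm1\}$ with value $-1$ exactly when it is satisfied. A clause is non-constant if it is equivalent neither to True nor to False. $\mathrm{FE}_c$ is the Fourier expansion of $c$, i.e. the unique multilinear polynomial agreeing with $c$ on $\{\pm1\}^n$. For a multilinear polynomial $F$ on $[-1,1]^n$, a set $J\subseteq[n]$ and a vector $z$, $F_{J\gets z}$ denotes the polynomial obtained by fixing the coordinates in $J$ to the values $z$. Feasibility: for $a\in[-1,1]^n$, let $I=\{i: a_i\in\{\pm1\}\}$ and let $a_I$ be the restriction of $a$ to the coordinates in $I$. Then $a$ is a feasible solution of $F$ if $F_{I\gets a_I}$ is a constant polynomial. *)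

theory Defs
  imports Complex_Main
begin

text \<open>Booleans are encoded as +1/-1, with -1 meaning True. Variables are indexed 0..n-1.
  A literal is a pair (i, neg): variable x_i, negated iff neg.\<close>

type_synonym lit = "nat \<times> bool"

datatype clause =
    CNF "lit list"
  | Card "lit list" nat
  | XOR "lit list"
  | NAE "lit list"

fun lits :: "clause \<Rightarrow> lit list" where
  "lits (CNF ls) = ls"
| "lits (Card ls k) = ls"
| "lits (XOR ls) = ls"
| "lits (NAE ls) = ls"

definition lit_true :: "(nat \<Rightarrow> real) \<Rightarrow> lit \<Rightarrow> bool" where
  "lit_true x l = (if snd l then x (fst l) = 1 else x (fst l) = -1)"

fun satisfied :: "clause \<Rightarrow> (nat \<Rightarrow> real) \<Rightarrow> bool" where
  "satisfied (CNF ls) x = (\<exists>l\<in>set ls. lit_true x l)"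
| "satisfied (Card ls k) x = (k \<le> length (filter (lit_true x) ls))"
| "satisfied (XOR ls) x = odd (length (filter (lit_true x) ls))"
| "satisfied (NAE ls) x = ((\<exists>l\<in>set ls. lit_true x l) \<and> (\<exists>l\<in>set ls. \<not> lit_true x l))"

definition clause_val :: "clause \<Rightarrow> (nat \<Rightarrow> real) \<Rightarrow> real" where
  "clause_val c x = (if satisfied c x then -1 else 1)"

definition wf_clause :: "nat \<Rightarrow> clause \<Rightarrow> bool" where
  "wf_clause n c = (distinct (map fst (lits c)) \<and> (\<forall>l\<in>set (lits c). fst l < n))"

definition bool_pt :: "nat set \<Rightarrow> nat \<Rightarrow> real" where
  "bool_pt S i = (if i \<in> S then -1 else 1)"

definition bool_cube :: "nat \<Rightarrow> (nat \<Rightarrow> real) set" where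
  "bool_cube n = bool_pt ` Pow {..<n}"

definition nonconstant :: "nat \<Rightarrow> clause \<Rightarrow> bool" where
  "nonconstant n c = (\<exists>x\<in>bool_cube n. \<exists>y\<in>bool_cube n. clause_val c x \<noteq> clause_val c y)"

text \<open>Multilinear polynomials in x_0..x_{n-1}: coefficient function on monomials (sets of variables).\<close>
type_synonym mlpoly = "nat set \<Rightarrow> real"

definition monom :: "nat set \<Rightarrow> (nat \<Rightarrow> real) \<Rightarrow> real" where
  "monom T x = (\<Prod>i\<in>T. x i)"

definition FE :: "nat \<Rightarrow> clause \<Rightarrow> mlpoly" where
  "FE n c T = (if T \<subseteq> {..<n}
      then (\<Sum>S\<in>Pow {..<n}. clause_val c (bool_pt S) * monom T (bool_pt S)) / 2 ^ n
      else 0)"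

definition ml_eval :: "nat \<Rightarrow> mlpoly \<Rightarrow> (nat \<Rightarrow> real) \<Rightarrow> real" where
  "ml_eval n p a = (\<Sum>T\<in>Pow {..<n}. p T * monom T a)"

text \<open>F_{J <- z}: fix the variables in J to the values z; result is a multilinear
  polynomial in the remaining variables.\<close>
definition fix_vars :: "nat \<Rightarrow> mlpoly \<Rightarrow> nat set \<Rightarrow> (nat \<Rightarrow> real) \<Rightarrow> mlpoly" where
  "fix_vars n p J z T = (if T \<subseteq> {..<n} - J
      then (\<Sum>S\<in>{S\<in>Pow {..<n}. S - J = T}. p S * monom (S \<inter> J) z)
      else 0)"

definition const_poly :: "mlpoly \<Rightarrow> bool" where
  "const_poly p = (\<forall>T. T \<noteq> {} \<longrightarrow> p T = 0)"

definition feasible :: "nat \<Rightarrow> mlpoly \<Rightarrow> (nat \<Rightarrow> real) \<Rightarrow> bool" where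
  "feasible n p a = const_poly (fix_vars n p {i. i < n \<and> (a i = 1 \<or> a i = -1)} a)"

end

theory Submission
  imports Defs
begin

lemma sum_pow_prod:
  fixes y :: "nat \<Rightarrow> real"
  assumes "finite A"
  shows "(\<Sum>U\<in>Pow A. \<Prod>i\<in>U. y i) = (\<Prod>i\<in>A. 1 + y i)"
  using prod_add[OF assms, of y "\<lambda>_. 1"] by (simp add: add.commute)

lemma sum_pow_factor:
  fixes g :: "nat \<Rightarrow> real \<Rightarrow> real"
  assumes "finite A"
  shows "(\<Sum>S\<in>Pow A. \<Prod>i\<in>A. g i (bool_pt S i)) = (\<Prod>i\<in>A. g i (-1) + g i 1)"
proof -
  have "(\<Prod>i\<in>A. g i (-1) + g i 1) = (\<Sum>S\<in>Pow A. (\<Prod>i\<in>S. g i (-1)) * (\<Prod>i\<in>A-S. g i 1))"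
    by (rule prod_add[OF assms])
  also have "\<dots> = (\<Sum>S\<in>Pow A. \<Prod>i\<in>A. g i (bool_pt S i))"
  proof (rule sum.cong[OF refl])
    fix S assume S: "S \<in> Pow A"
    have "(\<Prod>i\<in>A. g i (bool_pt S i)) = (\<Prod>i\<in>A. if i \<in> S then g i (-1) else g i 1)"
      by (simp add: bool_pt_def if_distrib)
    also have "\<dots> = (\<Prod>i\<in>A \<inter> {i. i\<in>S}. g i (-1)) * (\<Prod>i\<in>A \<inter> - {i. i\<in>S}. g i 1)"
      by (rule prod.If_cases[OF assms])
    also have "A \<inter> {i. i\<in>S} = S" using S by auto
    also have "A \<inter> - {i. i\<in>S} = A - S" by auto
    finally show "(\<Prod>i\<in>S. g i (-1)) * (\<Prod>i\<in>A-S. g i 1) = (\<Prod>i\<in>A. g i (bool_pt S i))" by simp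
  qed
  finally show ?thesis by simp
qed

lemma ml_eval_FE:
  "ml_eval n (FE n c) a = (\<Sum>S\<in>Pow {..<n}. clause_val c (bool_pt S) * (\<Prod>i\<in>{..<n}. 1 + bool_pt S i * a i)) / 2^n"
proof -
  have "ml_eval n (FE n c) a = (\<Sum>T\<in>Pow {..<n}. (\<Sum>S\<in>Pow {..<n}. clause_val c (bool_pt S) * monom T (bool_pt S)) / 2 ^ n * monom T a)"
    unfolding ml_eval_def FE_def by (intro sum.cong) auto
  also have "\<dots> = (\<Sum>T\<in>Pow {..<n}. \<Sum>S\<in>Pow {..<n}. clause_val c (bool_pt S) * (\<Prod>i\<in>T. bool_pt S i * a i)) / 2^n"
    by (simp add: sum_divide_distrib sum_distrib_right sum_distrib_left monom_def prod.distrib mult_ac)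
  also have "\<dots> = (\<Sum>S\<in>Pow {..<n}. clause_val c (bool_pt S) * (\<Sum>T\<in>Pow {..<n}. \<Prod>i\<in>T. bool_pt S i * a i)) / 2^n"
    by (subst sum.swap) (simp add: sum_distrib_left)
  also have "\<dots> = (\<Sum>S\<in>Pow {..<n}. clause_val c (bool_pt S) * (\<Prod>i\<in>{..<n}. 1 + bool_pt S i * a i)) / 2^n"
    by (simp add: sum_pow_prod)
  finally show ?thesis .
qed

theorem lemma4:
  fixes n :: nat and c :: clause and a :: "nat \<Rightarrow> real"
  assumes "wf_clause n c"
    and "nonconstant n c"
    and "\<forall>i<n. -1 \<le> a i \<and> a i \<le> 1"
    and "ml_eval n (FE n c) a = -1"
  shows "feasible n (FE n c) a"
proof -
  define N where "N = {..<n::nat}"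
  define f where "f S = clause_val c (bool_pt S)" for S
  define P where "P S = (\<Prod>i\<in>N. 1 + bool_pt S i * a i)" for S
  define J where "J = {i. i < n \<and> (a i = 1 \<or> a i = -1)}"
  define Q where "Q S = (\<Prod>i\<in>J. 1 + bool_pt S i * a i)" for S
  have finN: "finite N" by (simp add: N_def)
  have JN: "J \<subseteq> N" by (auto simp: J_def N_def)
  have finJ: "finite J" using finN JN finite_subset by blast
  have bp: "bool_pt S i = 1 \<or> bool_pt S i = -1" for S i by (simp add: bool_pt_def)
  have fpm: "f S = 1 \<or> f S = -1" for S by (simp add: f_def clause_val_def)
  have fac_nn: "0 \<le> 1 + bool_pt S i * a i" if "i \<in> N" for S i
    using bp[of S i] assms(3) that by (auto simp: N_def)
  have Pnn: "0 \<le> P S" for S unfolding P_def by (intro prod_nonneg) (use fac_nn in auto)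
  have sumP: "(\<Sum>S\<in>Pow N. P S) = 2^n"
  proof -
    have "(\<Sum>S\<in>Pow N. P S) = (\<Prod>i\<in>N. (1 + (-1) * a i) + (1 + 1 * a i))"
      unfolding P_def by (rule sum_pow_factor[OF finN, of "\<lambda>i s. 1 + s * a i"])
    also have "\<dots> = (\<Prod>i\<in>N. 2)" by simp
    finally show ?thesis by (simp add: N_def)
  qed
  have sumfP: "(\<Sum>S\<in>Pow N. f S * P S) = - (2^n)"
    using assms(4) unfolding ml_eval_FE by (simp add: f_def P_def N_def divide_eq_eq)
  have "(\<Sum>S\<in>Pow N. (f S + 1) * P S) = 0"
    using sumP sumfP by (simp add: algebra_simps sum.distrib)
  moreover have "\<forall>S\<in>Pow N. 0 \<le> (f S + 1) * P S"
    using fpm Pnn by (metis add.commute add_nonneg_nonneg mult_nonneg_nonneg neg_eq_iff_add_eq_0 order_refl zero_le_one add_0)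
  ultimately have zP: "(f S + 1) * P S = 0" if "S \<in> Pow N" for S
    using sum_nonneg_eq_0_iff[of "Pow N" "\<lambda>S. (f S + 1) * P S"] finN that by auto
  have zQ: "f S * Q S = - Q S" if "S \<in> Pow N" for S
  proof -
    have "P S = Q S * (\<Prod>i\<in>N - J. 1 + bool_pt S i * a i)"
      unfolding P_def Q_def using prod.subset_diff[OF JN finN] by (simp add: mult.commute)
    moreover have "(\<Prod>i\<in>N - J. 1 + bool_pt S i * a i) \<noteq> 0"
    proof -
      have "1 + bool_pt S i * a i \<noteq> 0" if i: "i \<in> N - J" for i
      proof -
        from i have "a i \<noteq> 1" "a i \<noteq> -1" "i < n" by (auto simp: J_def N_def)
        thus ?thesis using bp[of S i] by auto
      qed
      thus ?thesis using finN by (subst prod_zero_iff) auto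
    qed
    ultimately have "(f S + 1) * Q S = 0" using zP[OF that] by simp
    thus ?thesis by (simp add: algebra_simps)
  qed
  show ?thesis unfolding feasible_def const_poly_def
  proof (intro allI impI)
    fix T :: "nat set" assume Tne: "T \<noteq> {}"
    show "fix_vars n (FE n c) {i. i < n \<and> (a i = 1 \<or> a i = -1)} a T = 0"
    proof (cases "T \<subseteq> N - J")
      case False thus ?thesis by (simp add: fix_vars_def J_def N_def)
    next
      case True
      have TN: "T \<subseteq> N" and TJ: "T \<inter> J = {}" using True by auto
      have img: "{S\<in>Pow N. S - J = T} = (\<lambda>U. T \<union> U) ` Pow J"
      proof
        show "{S\<in>Pow N. S - J = T} \<subseteq> (\<lambda>U. T \<union> U) ` Pow J"
        proof
          fix S assume "S \<in> {S\<in>Pow N. S - J = T}"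
          hence "S = T \<union> (S \<inter> J)" by auto
          thus "S \<in> (\<lambda>U. T \<union> U) ` Pow J" by blast
        qed
      next
        show "(\<lambda>U. T \<union> U) ` Pow J \<subseteq> {S\<in>Pow N. S - J = T}" using TN JN TJ by auto
      qed
      have inj: "inj_on (\<lambda>U. T \<union> U) (Pow J)"
        using TJ by (auto simp: inj_on_def)
      have "fix_vars n (FE n c) J a T = (\<Sum>S\<in>{S\<in>Pow N. S - J = T}. FE n c S * monom (S \<inter> J) a)"
        using True by (simp add: fix_vars_def N_def)
      also have "\<dots> = (\<Sum>U\<in>Pow J. FE n c (T \<union> U) * monom ((T \<union> U) \<inter> J) a)"
        unfolding img by (subst sum.reindex[OF inj]) simp
      also have "\<dots> = (\<Sum>U\<in>Pow J. (\<Sum>S\<in>Pow N. f S * (monom T (bool_pt S) * monom U (bool_pt S))) / 2^n * monom U a)"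
      proof (rule sum.cong[OF refl])
        fix U assume U: "U \<in> Pow J"
        have "(T \<union> U) \<inter> J = U" using U TJ by auto
        moreover have "T \<union> U \<subseteq> {..<n}" using U JN TN by (auto simp: N_def)
        moreover have "monom (T \<union> U) x = monom T x * monom U x" for x
          unfolding monom_def
          by (rule prod.union_disjoint) (use TJ U finJ finN TN JN in \<open>auto intro: finite_subset\<close>)
        ultimately show "FE n c (T \<union> U) * monom ((T \<union> U) \<inter> J) a =
          (\<Sum>S\<in>Pow N. f S * (monom T (bool_pt S) * monom U (bool_pt S))) / 2^n * monom U a"
          by (simp add: FE_def f_def N_def)
      qed
      also have "\<dots> = (\<Sum>S\<in>Pow N. f S * monom T (bool_pt S) * (\<Sum>U\<in>Pow J. \<Prod>i\<in>U. bool_pt S i * a i)) / 2^n"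
      proof -
        have "(\<Sum>U\<in>Pow J. (\<Sum>S\<in>Pow N. f S * (monom T (bool_pt S) * monom U (bool_pt S))) / 2^n * monom U a)
          = (\<Sum>U\<in>Pow J. \<Sum>S\<in>Pow N. f S * monom T (bool_pt S) * (monom U (bool_pt S) * monom U a) / 2^n)"
          by (simp add: sum_divide_distrib sum_distrib_right sum_distrib_left mult_ac)
        also have "\<dots> = (\<Sum>S\<in>Pow N. \<Sum>U\<in>Pow J. f S * monom T (bool_pt S) * (monom U (bool_pt S) * monom U a) / 2^n)"
          by (rule sum.swap)
        also have "\<dots> = (\<Sum>S\<in>Pow N. f S * monom T (bool_pt S) * (\<Sum>U\<in>Pow J. \<Prod>i\<in>U. bool_pt S i * a i)) / 2^n"
          by (simp add: sum_divide_distrib sum_distrib_left monom_def prod.distrib)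
        finally show ?thesis .
      qed
      also have "\<dots> = (\<Sum>S\<in>Pow N. monom T (bool_pt S) * (f S * Q S)) / 2^n"
        by (simp add: sum_pow_prod[OF finJ] Q_def mult_ac)
      also have "\<dots> = - (\<Sum>S\<in>Pow N. monom T (bool_pt S) * Q S) / 2^n"
        by (simp add: zQ sum_negf)
      also have "(\<Sum>S\<in>Pow N. monom T (bool_pt S) * Q S) = 
          (\<Sum>S\<in>Pow N. \<Prod>i\<in>N. (\<lambda>i s. (if i \<in> T then s else 1) * (if i \<in> J then 1 + s * a i else 1)) i (bool_pt S i))"
      proof (rule sum.cong[OF refl])
        fix S
        have "(\<Prod>i\<in>N. (if i \<in> T then bool_pt S i else 1)) = monom T (bool_pt S)"
        proof -
          have e: "N \<inter> {i. i\<in>T} = T" using TN by auto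
          show ?thesis unfolding monom_def prod.If_cases[OF finN] e by simp
        qed
        moreover have "(\<Prod>i\<in>N. (if i \<in> J then 1 + bool_pt S i * a i else 1)) = Q S"
        proof -
          have e: "N \<inter> {i. i\<in>J} = J" using JN by auto
          show ?thesis unfolding Q_def prod.If_cases[OF finN] e by simp
        qed
        ultimately show "monom T (bool_pt S) * Q S = (\<Prod>i\<in>N. (\<lambda>i s. (if i \<in> T then s else 1) * (if i \<in> J then 1 + s * a i else 1)) i (bool_pt S i))"
          by (simp add: prod.distrib)
      qed
      also have "\<dots> = (\<Prod>i\<in>N. (\<lambda>i s. (if i \<in> T then s else 1) * (if i \<in> J then 1 + s * a i else 1)) i (-1)
                       + (\<lambda>i s. (if i \<in> T then s else 1) * (if i \<in> J then 1 + s * a i else 1)) i 1)"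
        by (rule sum_pow_factor[OF finN])
      also have "\<dots> = 0"
      proof -
        obtain t where t: "t \<in> T" using Tne by auto
        hence "t \<in> N" "t \<notin> J" using TN TJ by auto
        thus ?thesis using t finN by (intro prod_zero) auto
      qed
      finally show ?thesis by (simp add: J_def)
    qed
  qed
qed

end
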